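(* Let $A=(A_1,\dots,A_d)$ have a palindromic distribution $p$ on $\{0,1\}^d$ with $p(a)>0$ for all $a$. If the largest clique of the concentration graph of $p$ has size three, then $p$ is a palindromic Ising model, i.e. all log-linear interactions $\lambda_b=2^{-d}\sum_{a}(-1)^{a\cdot b}\log p(a)$ with $|b|\ge 3$ vanish.
   Context: Palindromic: $p(a)=p(\sim a)$ for all $a$, where $\sim a$ is the complement of the binary vector $a$. For $b\in\{0,1\}^d$, $|b|=\sum_v b_v$ and $a\cdot b=\sum_v a_vb_v$. The concentration graph of $p$ is the undirected graph on nodes $\{1,\dots,d\}$ in which the edge $\{i,j\}$ is missing if and only if $A_i\perp\!\!\!\perp A_j\mid (A_v)_{v\ne i,j}$ (equivalently, the two-factor log-linear interaction of $i,j$ and all higher interactions containing $i,j$ vanish). A clique is a maximal complete subset of nodes. An Ising model is a positive distribution on $\{0,1\}^d$ with no log-linear interaction of order higher than two; it is a palindromic Ising model if it is moreover palindromic (equivalently, has in addition uniform margins). *)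

theory Defs
  imports Complex_Main
begin

text \<open>A binary vector a in {0,1}^d is encoded as the set of coordinates v in {1..d}
  with a_v = 1, i.e. as a subset of {1..d}. A distribution is p :: nat set => real
  on Pow {1..d}.\<close>

definition nodes :: "nat \<Rightarrow> nat set" where
  "nodes d = {1..d}"

definition compl_vec :: "nat \<Rightarrow> nat set \<Rightarrow> nat set" where
  "compl_vec d a = nodes d - a"

definition palindromic :: "nat \<Rightarrow> (nat set \<Rightarrow> real) \<Rightarrow> bool" where
  "palindromic d p \<longleftrightarrow> (\<forall>a \<subseteq> nodes d. p a = p (compl_vec d a))"

definition set_coord :: "nat set \<Rightarrow> nat \<Rightarrow> bool \<Rightarrow> nat set" where
  "set_coord a i x = (if x then insert i a else a - {i})"

text \<open>Conditional independence of A_i and A_j given all other coordinates: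
  P(A_i=a_i,A_j=a_j,A_rest=a_rest) P(A_rest=a_rest)
   = P(A_i=a_i,A_rest=a_rest) P(A_j=a_j,A_rest=a_rest) for all a.\<close>
definition cond_indep :: "nat \<Rightarrow> (nat set \<Rightarrow> real) \<Rightarrow> nat \<Rightarrow> nat \<Rightarrow> bool" where
  "cond_indep d p i j \<longleftrightarrow>
     (\<forall>a \<subseteq> nodes d.
        p a * (\<Sum>x\<in>UNIV. \<Sum>y\<in>UNIV. p (set_coord (set_coord a i x) j y))
        = (\<Sum>y\<in>UNIV. p (set_coord a j y)) * (\<Sum>x\<in>UNIV. p (set_coord a i x)))"

definition conc_edge :: "nat \<Rightarrow> (nat set \<Rightarrow> real) \<Rightarrow> nat \<Rightarrow> nat \<Rightarrow> bool" where
  "conc_edge d p i j \<longleftrightarrow> i \<in> nodes d \<and> j \<in> nodes d \<and> i \<noteq> j \<and> \<not> cond_indep d p i j"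

definition complete_set :: "nat \<Rightarrow> (nat set \<Rightarrow> real) \<Rightarrow> nat set \<Rightarrow> bool" where
  "complete_set d p C \<longleftrightarrow> C \<subseteq> nodes d \<and> (\<forall>i\<in>C. \<forall>j\<in>C. i \<noteq> j \<longrightarrow> conc_edge d p i j)"

definition clique :: "nat \<Rightarrow> (nat set \<Rightarrow> real) \<Rightarrow> nat set \<Rightarrow> bool" where
  "clique d p C \<longleftrightarrow> complete_set d p C \<and>
     (\<forall>D. complete_set d p D \<and> C \<subseteq> D \<longrightarrow> D = C)"

definition max_clique_size :: "nat \<Rightarrow> (nat set \<Rightarrow> real) \<Rightarrow> nat" where
  "max_clique_size d p = Max (card ` {C. clique d p C})"

definition loglin :: "nat \<Rightarrow> (nat set \<Rightarrow> real) \<Rightarrow> nat set \<Rightarrow> real" where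
  "loglin d p b = (1 / 2 ^ d) * (\<Sum>a\<in>Pow (nodes d). (-1) ^ card (a \<inter> b) * ln (p a))"

end

theory Submission
  imports Defs
begin

lemma sum_Pow_insert':
  assumes "finite A" "x \<notin> A"
  shows "sum g (Pow (insert x A)) = sum g (Pow A) + sum (\<lambda>s. g (insert x s)) (Pow A)"
proof -
  have inj: "inj_on (insert x) (Pow A)"
    using assms(2) unfolding inj_on_def by (metis PowD insert_ident subsetD)
  have disj: "Pow A \<inter> insert x ` Pow A = {}" using assms(2) by auto
  have "sum g (Pow (insert x A)) = sum g (Pow A \<union> insert x ` Pow A)"
    by (simp add: Pow_insert)
  also have "\<dots> = sum g (Pow A) + sum g (insert x ` Pow A)"
    by (rule sum.union_disjoint) (use assms disj in auto)
  also have "sum g (insert x ` Pow A) = sum (\<lambda>s. g (insert x s)) (Pow A)"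
    using sum.reindex[OF inj] by (simp add: comp_def)
  finally show ?thesis .
qed

lemma cross_ratio:
  assumes pos: "\<forall>a \<subseteq> nodes d. p a > 0"
    and ci: "cond_indep d p i j" and ij: "i \<noteq> j"
    and s: "s \<subseteq> nodes d" "i \<notin> s" "j \<notin> s"
  shows "p s * p (insert i (insert j s)) = p (insert i s) * p (insert j s)"
proof -
  have e1: "s - {i} = s" "s - {j} = s" "insert i s - {j} = insert i s"
    "insert j (insert i s) = insert i (insert j s)"
    using s ij by auto
  have "p s * (\<Sum>x\<in>UNIV. \<Sum>y\<in>UNIV. p (set_coord (set_coord s i x) j y))
        = (\<Sum>y\<in>UNIV. p (set_coord s j y)) * (\<Sum>x\<in>UNIV. p (set_coord s i x))"
    using ci s unfolding cond_indep_def by blast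
  hence "p s * (p (insert i (insert j s)) + p (insert i s) + (p (insert j s) + p s))
       = (p (insert j s) + p s) * (p (insert i s) + p s)"
    by (simp add: set_coord_def UNIV_bool e1 add.commute)
  thus ?thesis by (simp add: algebra_simps)
qed

lemma loglin_zero_indep:
  assumes pos: "\<forall>a \<subseteq> nodes d. p a > 0"
    and ci: "cond_indep d p i j" and ij: "i \<noteq> j"
    and inn: "i \<in> nodes d" "j \<in> nodes d" and inb: "i \<in> b" "j \<in> b"
  shows "loglin d p b = 0"
proof -
  define g where "g = (\<lambda>a. (-1::real) ^ card (a \<inter> b) * ln (p a))"
  define N' where "N' = nodes d - {i, j}"
  have fin: "finite N'" unfolding N'_def nodes_def by simp
  have N: "nodes d = insert i (insert j N')" using inn unfolding N'_def by auto
  have "(\<Sum>a\<in>Pow (nodes d). g a) =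
     (\<Sum>s\<in>Pow N'. g s + g (insert j s) + (g (insert i s) + g (insert i (insert j s))))"
  proof -
    have "(\<Sum>a\<in>Pow (nodes d). g a) = sum g (Pow (insert j N')) + (\<Sum>s\<in>Pow (insert j N'). g (insert i s))"
      unfolding N by (rule sum_Pow_insert') (use fin ij in \<open>auto simp: N'_def\<close>)
    also have "sum g (Pow (insert j N')) = sum g (Pow N') + (\<Sum>s\<in>Pow N'. g (insert j s))"
      by (rule sum_Pow_insert') (use fin in \<open>auto simp: N'_def\<close>)
    also have "(\<Sum>s\<in>Pow (insert j N'). g (insert i s)) = (\<Sum>s\<in>Pow N'. g (insert i s)) + (\<Sum>s\<in>Pow N'. g (insert i (insert j s)))"
      by (rule sum_Pow_insert') (use fin in \<open>auto simp: N'_def\<close>)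
    finally show ?thesis by (simp add: sum.distrib)
  qed
  also have "\<dots> = 0"
  proof (rule sum.neutral, rule ballI)
    fix s assume "s \<in> Pow N'"
    hence s: "s \<subseteq> nodes d" "i \<notin> s" "j \<notin> s" by (auto simp: N'_def)
    have finb: "finite (s \<inter> b)" using s(1) finite_subset unfolding nodes_def by auto
    have e1: "insert j s \<inter> b = insert j (s \<inter> b)" using inb by auto
    have e2: "insert i s \<inter> b = insert i (s \<inter> b)" using inb by auto
    have e3: "insert i (insert j s) \<inter> b = insert i (insert j (s \<inter> b))" using inb by auto
    have c1: "card (insert j s \<inter> b) = Suc (card (s \<inter> b))"
      unfolding e1 using s finb by (subst card_insert_disjoint) auto
    have c2: "card (insert i s \<inter> b) = Suc (card (s \<inter> b))"
      unfolding e2 using s finb by (subst card_insert_disjoint) auto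
    have c3: "card (insert i (insert j s) \<inter> b) = Suc (Suc (card (s \<inter> b)))"
      unfolding e3 using s finb ij by (simp add: card_insert_disjoint)
    have ps: "p s > 0" "p (insert i s) > 0" "p (insert j s) > 0" "p (insert i (insert j s)) > 0"
      using pos s inn by auto
    have cr: "p s * p (insert i (insert j s)) = p (insert i s) * p (insert j s)"
      by (rule cross_ratio[OF pos ci ij s])
    have "ln (p s * p (insert i (insert j s))) = ln (p (insert i s) * p (insert j s))"
      using cr by simp
    hence L: "ln (p s) + ln (p (insert i (insert j s))) = ln (p (insert i s)) + ln (p (insert j s))"
      using ps by (simp add: ln_mult)
    define c where "c = (-1::real) ^ card (s \<inter> b)"
    have "g s + g (insert j s) + (g (insert i s) + g (insert i (insert j s)))
       = c * ((ln (p s) + ln (p (insert i (insert j s)))) - (ln (p (insert i s)) + ln (p (insert j s))))"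
      unfolding g_def c1 c2 c3 c_def power_Suc by (simp add: algebra_simps)
    thus "g s + g (insert j s) + (g (insert i s) + g (insert i (insert j s))) = 0"
      using L by simp
  qed
  finally show ?thesis unfolding loglin_def g_def by simp
qed

lemma loglin_zero_odd:
  assumes pal: "palindromic d p" and b: "b \<subseteq> nodes d" and odd: "odd (card b)"
  shows "loglin d p b = 0"
proof -
  define N where "N = nodes d"
  have finN: "finite N" unfolding N_def nodes_def by simp
  define g where "g = (\<lambda>a. (-1::real) ^ card (a \<inter> b) * ln (p a))"
  have "(\<Sum>a\<in>Pow N. g a) = (\<Sum>a\<in>Pow N. g (N - a))"
    by (rule sum.reindex_bij_witness[where i="\<lambda>a. N - a" and j="\<lambda>a. N - a"]) (auto simp: double_diff)
  also have "\<dots> = (\<Sum>a\<in>Pow N. - g a)"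
  proof (rule sum.cong[OF refl])
    fix a assume a: "a \<in> Pow N"
    have e: "(N - a) \<inter> b = b - (a \<inter> b)" using b unfolding N_def by blast
    have fb: "finite b" using b finN finite_subset unfolding N_def by blast
    have f2: "finite (a \<inter> b)" using fb by simp
    have "card (b - (a \<inter> b)) = card b - card (a \<inter> b)"
      using f2 by (simp add: card_Diff_subset)
    moreover have "card (a \<inter> b) \<le> card b" using fb by (simp add: card_mono)
    ultimately have cd: "card ((N - a) \<inter> b) + card (a \<inter> b) = card b"
      unfolding e by simp
    have pm: "(-1::real) ^ card ((N - a) \<inter> b) = - ((-1) ^ card (a \<inter> b))"
    proof -
      have "even (card ((N - a) \<inter> b)) \<longleftrightarrow> odd (card (a \<inter> b))"
        using cd odd by presburger
      thus ?thesis by (simp add: minus_one_power_iff)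
    qed
    have "a \<subseteq> nodes d" using a unfolding N_def by simp
    hence "p a = p (compl_vec d a)" using pal unfolding palindromic_def by blast
    hence "p (N - a) = p a" unfolding compl_vec_def N_def by (rule sym)
    thus "g (N - a) = - g a" unfolding g_def pm by simp
  qed
  also have "\<dots> = - (\<Sum>a\<in>Pow N. g a)" by (simp add: sum_negf)
  finally have "(\<Sum>a\<in>Pow N. g a) = 0" by simp
  thus ?thesis unfolding loglin_def g_def N_def by simp
qed

lemma ne_ifI: "x \<in> A \<Longrightarrow> A \<noteq> {}" by auto

theorem proposition5p1:
  fixes d :: nat and p :: "nat set \<Rightarrow> real"
  assumes pos: "\<forall>a \<subseteq> nodes d. p a > 0"
    and distr: "(\<Sum>a\<in>Pow (nodes d). p a) = 1"
    and pal: "palindromic d p"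
    and clq: "max_clique_size d p = 3"
  shows "\<forall>b \<subseteq> nodes d. card b \<ge> 3 \<longrightarrow> loglin d p b = 0"
proof (intro allI impI)
  fix b assume b: "b \<subseteq> nodes d" and cb: "card b \<ge> 3"
  have finN: "finite (nodes d)" unfolding nodes_def by simp
  show "loglin d p b = 0"
  proof (cases "odd (card b)")
    case True thus ?thesis using loglin_zero_odd[OF pal b] by simp
  next
    case False
    hence c4: "card b \<ge> 4" using cb by presburger
    show ?thesis
    proof (cases "\<exists>i\<in>b. \<exists>j\<in>b. i \<noteq> j \<and> \<not> conc_edge d p i j")
      case True
      then obtain i j where "i \<in> b" "j \<in> b" "i \<noteq> j" "\<not> conc_edge d p i j" by blast
      thus ?thesis using loglin_zero_indep[OF pos, of i j b] b unfolding conc_edge_def by auto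
    next
      case False
      hence cs: "complete_set d p b" using b unfolding complete_set_def by blast
      let ?S = "{D. complete_set d p D \<and> b \<subseteq> D}"
      have finS: "finite ?S"
        by (rule finite_subset[of _ "Pow (nodes d)"]) (use finN in \<open>auto simp: complete_set_def\<close>)
      have "b \<in> ?S" using cs by simp
      hence "?S \<noteq> {}" by (rule ne_ifI)
      from finite_has_maximal[OF finS this] obtain m where
        m: "m \<in> ?S" and mx: "\<forall>D\<in>?S. m \<le> D \<longrightarrow> m = D" ..
      have cl: "clique d p m" unfolding clique_def
      proof (intro conjI allI impI)
        show "complete_set d p m" using m by simp
        fix D assume D: "complete_set d p D \<and> m \<subseteq> D"
        hence "D \<in> ?S" using m by (simp, blast)
        thus "D = m" using mx D by (metis order_refl)
      qed
      have "m \<subseteq> nodes d" using m by (simp add: complete_set_def)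
      hence finm: "finite m" using finN by (rule finite_subset)
      have "b \<subseteq> m" using m by simp
      hence "card b \<le> card m" using card_mono[OF finm] by blast
      hence "card m \<ge> 4" using c4 by linarith
      moreover have "card m \<le> max_clique_size d p" unfolding max_clique_size_def
      proof (rule Max_ge)
        show "finite (card ` {C. clique d p C})"
          by (rule finite_imageI, rule finite_subset[of _ "Pow (nodes d)"])
             (use finN in \<open>auto simp: clique_def complete_set_def\<close>)
        show "card m \<in> card ` {C. clique d p C}" using cl by auto
      qed
      ultimately show ?thesis using clq by simp
    qed
  qed
qed

end
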